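(* Define a relation $\sim$ on $\mathbb{G}$ by declaring $(s,p)\sim(t,q)$ if and only if there exists $\varphi\in \mathrm{Aut}(\mathbb{D})$ with $H_\varphi(s,p)=(t,q)$. Then $\sim$ is an equivalence relation on $\mathbb{G}$. Moreover, writing $[(s,p)]$ for the equivalence class of $(s,p)\in\mathbb{G}$, the set of equivalence classes is $\{[(a,0)] : a\in[0,1)\}$.
   Context: $\mathbb{D}$ is the open unit disc in $\mathbb{C}$ and $\mathrm{Aut}(\mathbb{D})$ its group of holomorphic automorphisms. The symmetrized bidisc is $\mathbb{G}=\{(z_1+z_2,z_1z_2): z_1,z_2\in\mathbb{D}\}\subset\mathbb{C}^2$. For $\varphi\in\mathrm{Aut}(\mathbb{D})$, $H_\varphi:\mathbb{G}\to\mathbb{G}$ is defined by $H_\varphi(z_1+z_2,z_1z_2)=(\varphi(z_1)+\varphi(z_2),\varphi(z_1)\varphi(z_2))$. Note $(a,0)\in\mathbb{G}$ for every $a\in[0,1)$. *)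

theory Defs
  imports "HOL-Complex_Analysis.Complex_Analysis"
begin

definition aut_disc :: "(complex \<Rightarrow> complex) \<Rightarrow> bool" where
  "aut_disc \<phi> \<longleftrightarrow> \<phi> holomorphic_on ball 0 1 \<and> bij_betw \<phi> (ball 0 1) (ball 0 1)"

definition symG :: "(complex \<times> complex) set" where
  "symG = {(z1 + z2, z1 * z2) | z1 z2. z1 \<in> ball 0 1 \<and> z2 \<in> ball 0 1}"

definition H_aut :: "(complex \<Rightarrow> complex) \<Rightarrow> complex \<times> complex \<Rightarrow> complex \<times> complex" where
  "H_aut \<phi> x = (let (z1, z2) = (SOME (z1, z2). z1 \<in> ball 0 1 \<and> z2 \<in> ball 0 1 \<and> x = (z1 + z2, z1 * z2))
                 in (\<phi> z1 + \<phi> z2, \<phi> z1 * \<phi> z2))"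

definition G_rel :: "((complex \<times> complex) \<times> (complex \<times> complex)) set" where
  "G_rel = {(x, y). x \<in> symG \<and> y \<in> symG \<and> (\<exists>\<phi>. aut_disc \<phi> \<and> H_aut \<phi> x = y)}"

end

theory Submission
  imports Defs
begin

lemma pair_roots:
  fixes z1 z2 w1 w2 :: complex
  assumes "w1 + w2 = z1 + z2" "w1 * w2 = z1 * z2"
  shows "(w1 = z1 \<and> w2 = z2) \<or> (w1 = z2 \<and> w2 = z1)"
proof -
  have "(w1 - z1) * (w1 - z2) = w1*w1 - w1*(z1+z2) + z1*z2" by (simp add: algebra_simps)
  also have "\<dots> = w1*w1 - w1*(w1+w2) + w1*w2" using assms by simp
  also have "\<dots> = 0" by (simp add: algebra_simps)
  finally have "w1 = z1 \<or> w1 = z2" by simp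
  then show ?thesis using assms(1) by auto
qed

lemma H_eq:
  assumes "z1 \<in> ball 0 1" "z2 \<in> ball 0 1"
  shows "H_aut \<phi> (z1 + z2, z1 * z2) = (\<phi> z1 + \<phi> z2, \<phi> z1 * \<phi> z2)"
proof -
  define P where "P = (\<lambda>(a::complex, b::complex). a \<in> ball 0 1 \<and> b \<in> ball 0 1 \<and> (z1 + z2, z1 * z2) = (a + b, a * b))"
  have "P (z1, z2)" using assms by (simp add: P_def)
  hence "P (SOME p. P p)" by (rule someI)
  moreover obtain w1 w2 where w: "(SOME p. P p) = (w1, w2)" by fastforce
  ultimately have "w1 + w2 = z1 + z2" "w1 * w2 = z1 * z2" by (auto simp: P_def)
  hence "(w1 = z1 \<and> w2 = z2) \<or> (w1 = z2 \<and> w2 = z1)" by (rule pair_roots)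
  moreover have "H_aut \<phi> (z1 + z2, z1 * z2) = (\<phi> w1 + \<phi> w2, \<phi> w1 * \<phi> w2)"
    using w unfolding H_aut_def P_def by simp
  ultimately show ?thesis by (auto simp: algebra_simps)
qed

lemma aut_id: "aut_disc (\<lambda>z. z)"
  unfolding aut_disc_def by (auto simp: bij_betw_def)

lemma aut_comp:
  assumes "aut_disc f" "aut_disc g"
  shows "aut_disc (g \<circ> f)"
proof -
  have "f ` ball 0 1 = ball 0 1" using assms(1) by (simp add: aut_disc_def bij_betw_def)
  then show ?thesis using assms unfolding aut_disc_def
    by (auto intro: holomorphic_on_compose_gen bij_betw_trans)
qed

lemma aut_maps: "aut_disc f \<Longrightarrow> z \<in> ball 0 1 \<Longrightarrow> f z \<in> ball 0 1"
  unfolding aut_disc_def bij_betw_def by auto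

lemma aut_inv:
  assumes "aut_disc f"
  obtains g where "aut_disc g" "\<And>z. z \<in> ball 0 1 \<Longrightarrow> g (f z) = z"
proof -
  have hf: "f holomorphic_on ball 0 1" and inj: "inj_on f (ball 0 1)" and im: "f ` ball 0 1 = ball 0 1"
    using assms by (auto simp: aut_disc_def bij_betw_def)
  obtain g where hg: "g holomorphic_on f ` ball 0 1"
    and "\<And>z. z \<in> ball 0 1 \<Longrightarrow> deriv f z * deriv g (f z) = 1"
    and gf: "\<And>z. z \<in> ball 0 1 \<Longrightarrow> g (f z) = z"
    by (rule holomorphic_has_inverse[OF hf open_ball inj]) blast
  have "bij_betw g (ball 0 1) (ball 0 1)"
  proof (rule bij_betwI[where g = f])
    show "g \<in> ball 0 1 \<rightarrow> ball 0 1"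
    proof
      fix w :: complex assume "w \<in> ball 0 1"
      then obtain z where "z \<in> ball 0 1" "w = f z" using im by blast
      then show "g w \<in> ball 0 1" using gf by simp
    qed
    show "f \<in> ball 0 1 \<rightarrow> ball 0 1" using im by blast
    show "\<And>x. x \<in> ball 0 1 \<Longrightarrow> f (g x) = x"
    proof -
      fix w :: complex assume "w \<in> ball 0 1"
      then obtain z where "z \<in> ball 0 1" "w = f z" using im by blast
      then show "f (g w) = w" using gf by simp
    qed
    show "\<And>x. x \<in> ball 0 1 \<Longrightarrow> g (f x) = x" by (rule gf)
  qed
  then have "aut_disc g" using hg im by (simp add: aut_disc_def)
  then show ?thesis using gf that by blast
qed

lemma aut_moebius:
  assumes "norm a < 1"
  shows "aut_disc (Moebius_function 0 a)"
proof -
  have "a \<in> ball 0 1" using assms by simp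
  have "bij_betw (Moebius_function 0 a) (ball 0 1) (ball 0 1)"
  proof (rule bij_betwI[where g = "Moebius_function 0 (-a)"])
    show "Moebius_function 0 a \<in> ball 0 1 \<rightarrow> ball 0 1"
      using Moebius_function_norm_lt_1 assms by auto
    show "Moebius_function 0 (-a) \<in> ball 0 1 \<rightarrow> ball 0 1"
      using Moebius_function_norm_lt_1 assms by auto
    show "\<And>x. x \<in> ball 0 1 \<Longrightarrow> Moebius_function 0 (-a) (Moebius_function 0 a x) = x"
      using Moebius_function_compose assms by auto
    show "\<And>x. x \<in> ball 0 1 \<Longrightarrow> Moebius_function 0 a (Moebius_function 0 (-a) x) = x"
      using Moebius_function_compose assms by auto
  qed
  then show ?thesis using Moebius_function_holomorphic[OF assms] by (simp add: aut_disc_def)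
qed

lemma aut_rot:
  assumes "norm c = 1"
  shows "aut_disc (\<lambda>z. c * z)"
proof -
  have c0: "c \<noteq> 0" using assms by auto
  have "bij_betw (\<lambda>z. c * z) (ball 0 1) (ball 0 1)"
  proof (rule bij_betwI[where g = "\<lambda>z. z / c"])
    show "(\<lambda>z. c * z) \<in> ball 0 1 \<rightarrow> ball 0 1" using assms by (auto simp: norm_mult)
    show "(\<lambda>z. z / c) \<in> ball 0 1 \<rightarrow> ball 0 1" using assms by (auto simp: norm_divide)
    show "\<And>x. x \<in> ball 0 1 \<Longrightarrow> c * (x / c) = x" using c0 by simp
    show "\<And>x. x \<in> ball 0 1 \<Longrightarrow> c * x / c = x" using c0 by simp
  qed
  then show ?thesis by (simp add: aut_disc_def holomorphic_intros)
qed

lemma symG_elem: "x \<in> symG \<Longrightarrow> \<exists>z1 z2. z1 \<in> ball 0 1 \<and> z2 \<in> ball 0 1 \<and> x = (z1 + z2, z1 * z2)"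
  unfolding symG_def by auto

lemma H_symG: "aut_disc f \<Longrightarrow> x \<in> symG \<Longrightarrow> H_aut f x \<in> symG"
  using symG_elem[of x] H_eq aut_maps unfolding symG_def by fastforce

lemma equiv_G: "equiv symG G_rel"
proof (rule equivI)
  show "G_rel \<subseteq> symG \<times> symG" unfolding G_rel_def by auto
  show "refl_on symG G_rel"
  proof (rule refl_onI)
    fix x assume x: "x \<in> symG"
    then obtain z1 z2 where "z1 \<in> ball 0 1" "z2 \<in> ball 0 1" "x = (z1 + z2, z1 * z2)"
      using symG_elem by blast
    then have "H_aut (\<lambda>z. z) x = x" using H_eq by simp
    then show "(x, x) \<in> G_rel" using x aut_id unfolding G_rel_def by blast
  qed
  show "sym G_rel"
  proof (rule symI)
    fix x y assume "(x, y) \<in> G_rel"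
    then obtain f where x: "x \<in> symG" and y: "y \<in> symG" and f: "aut_disc f" "H_aut f x = y"
      unfolding G_rel_def by blast
    obtain z1 z2 where z: "z1 \<in> ball 0 1" "z2 \<in> ball 0 1" "x = (z1 + z2, z1 * z2)"
      using symG_elem x by blast
    obtain g where g: "aut_disc g" "\<And>z. z \<in> ball 0 1 \<Longrightarrow> g (f z) = z"
      using aut_inv f(1) by blast
    have "y = (f z1 + f z2, f z1 * f z2)" using f z H_eq by simp
    then have "H_aut g y = x" using H_eq[of "f z1" "f z2" g] aut_maps[OF f(1)] z g by simp
    then show "(y, x) \<in> G_rel" using x y g unfolding G_rel_def by blast
  qed
  show "trans G_rel"
  proof (rule transI)
    fix x y w assume "(x, y) \<in> G_rel" "(y, w) \<in> G_rel"
    then obtain f g where x: "x \<in> symG" and w: "w \<in> symG" and f: "aut_disc f" "H_aut f x = y"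
      and g: "aut_disc g" "H_aut g y = w"
      unfolding G_rel_def by blast
    obtain z1 z2 where z: "z1 \<in> ball 0 1" "z2 \<in> ball 0 1" "x = (z1 + z2, z1 * z2)"
      using symG_elem x by blast
    have "y = (f z1 + f z2, f z1 * f z2)" using f z H_eq by simp
    then have "w = (g (f z1) + g (f z2), g (f z1) * g (f z2))"
      using g H_eq[of "f z1" "f z2" g] aut_maps[OF f(1)] z by simp
    then have "H_aut (g \<circ> f) x = w" using H_eq z by simp
    then show "(x, w) \<in> G_rel" using x w aut_comp[OF f(1) g(1)] unfolding G_rel_def by blast
  qed
qed

lemma class_rep:
  assumes x: "x \<in> symG"
  shows "\<exists>a. 0 \<le> a \<and> a < 1 \<and> (x, (complex_of_real a, 0)) \<in> G_rel"
proof -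
  obtain z1 z2 where z: "z1 \<in> ball 0 1" "z2 \<in> ball 0 1" "x = (z1 + z2, z1 * z2)"
    using symG_elem x by blast
  define m where "m = Moebius_function 0 z2"
  have m: "aut_disc m" using aut_moebius z(2) by (simp add: m_def)
  define u where "u = m z1"
  have u: "norm u < 1" using aut_maps[OF m z(1)] by (simp add: u_def)
  have m2: "m z2 = 0" by (simp add: m_def Moebius_function_eq_zero)
  define c where "c = (if u = 0 then 1 else cnj u / complex_of_real (norm u))"
  have c1: "norm c = 1" by (simp add: c_def norm_divide)
  have cu0: "cnj u * u = complex_of_real (norm u) * complex_of_real (norm u)"
    using complex_norm_square[of u] by (simp add: power2_eq_square mult.commute)
  have cu: "c * u = complex_of_real (norm u)"
    using cu0 by (simp add: c_def)
  define f where "f = (\<lambda>z. c * z) \<circ> m"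
  have f: "aut_disc f" unfolding f_def by (rule aut_comp[OF m aut_rot[OF c1]])
  have "H_aut f x = (complex_of_real (norm u), 0)"
    using H_eq z cu m2 by (simp add: f_def u_def)
  moreover have "(complex_of_real (norm u), 0) \<in> symG"
  proof -
    have "complex_of_real (norm u) \<in> ball 0 1" "(0::complex) \<in> ball 0 1" using u by auto
    moreover have "(complex_of_real (norm u), 0) = (complex_of_real (norm u) + 0, complex_of_real (norm u) * 0)" by simp
    ultimately show ?thesis unfolding symG_def by blast
  qed
  ultimately show ?thesis using x f u unfolding G_rel_def
    by (intro exI[of _ "norm u"]) auto
qed

theorem theorem2p1:
  shows "equiv symG G_rel \<and>
         symG // G_rel = {G_rel `` {(complex_of_real a, 0)} | a. 0 \<le> a \<and> a < 1}"
proof (intro conjI equiv_G)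
  show "symG // G_rel = {G_rel `` {(complex_of_real a, 0)} | a. 0 \<le> a \<and> a < 1}"
  proof (rule set_eqI, rule iffI)
    fix C assume "C \<in> symG // G_rel"
    then obtain x where x: "x \<in> symG" "C = G_rel `` {x}" by (auto elim: quotientE)
    obtain a where a: "0 \<le> a" "a < 1" "(x, (complex_of_real a, 0)) \<in> G_rel"
      using class_rep[OF x(1)] by blast
    have "G_rel `` {x} = G_rel `` {(complex_of_real a, 0)}"
      by (rule equiv_class_eq[OF equiv_G a(3)])
    then show "C \<in> {G_rel `` {(complex_of_real a, 0)} | a. 0 \<le> a \<and> a < 1}"
      using a x by blast
  next
    fix C assume "C \<in> {G_rel `` {(complex_of_real a, 0)} | a. 0 \<le> a \<and> a < 1}"
    then obtain a where a: "0 \<le> a" "a < 1" "C = G_rel `` {(complex_of_real a, 0)}" by blast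
    have "(complex_of_real a, 0) \<in> symG"
    proof -
      have "complex_of_real a \<in> ball 0 1" "(0::complex) \<in> ball 0 1" using a by auto
      moreover have "(complex_of_real a, 0) = (complex_of_real a + 0, complex_of_real a * 0)" by simp
      ultimately show ?thesis unfolding symG_def by blast
    qed
    then show "C \<in> symG // G_rel" unfolding a(3) by (rule quotientI)
  qed
qed

end
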